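(* Let $n\ge p\ge1$, $\lambda>0$, $0<\varepsilon<\frac34$, and let $f:\mathbb{R}^{n\times p}\to\mathbb{R}$ be twice continuously differentiable. Let $\mathrm{St}(p,n)^\varepsilon=\{X:\|X^\top X-I_p\|\le\varepsilon\}$, let $L>0$ be such that $\nabla f$ is $L$-Lipschitz on $\mathrm{St}(p,n)^\varepsilon$, $L'=\max_{X\in\mathrm{St}(p,n)^\varepsilon}\|\nabla f(X)\|$, $\hat L=\max(L,L')$, and $s=\sup_{X\in\mathrm{St}(p,n)^\varepsilon}\|\mathrm{sym}(X^\top\nabla f(X))\|$. Let $$\mu\ge\frac{2}{3-4\varepsilon}\left(L(1-\varepsilon)+3s+\hat L^2\frac{(1+\varepsilon)^2}{\lambda(1-\varepsilon)}\right),\qquad \nu=\lambda\mu,$$ and $\mathcal{L}(X)=f(X)-\frac12\langle\mathrm{sym}(X^\top\nabla f(X)),X^\top X-I_p\rangle+\mu\mathcal{N}(X)$. Then for all $X\in\mathrm{St}(p,n)^\varepsilon$, $$\langle\nabla\mathcal{L}(X),\Lambda(X)\rangle\ge\frac12\|\mathrm{grad}f(X)\|^2+\nu\mathcal{N}(X).$$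
   Context: $\|\cdot\|$ and $\langle\cdot,\cdot\rangle$ are the Frobenius norm and inner product. $\mathrm{sym}(M)=\frac12(M+M^\top)$, $\mathrm{skew}(M)=\frac12(M-M^\top)$. $\mathcal{N}(X)=\frac14\|X^\top X-I_p\|^2$. For all $X\in\mathbb{R}^{n\times p}$, $\mathrm{grad}f(X)=\mathrm{skew}(\nabla f(X)X^\top)X$, and the landing field is $\Lambda(X)=\mathrm{grad}f(X)+\lambda X(X^\top X-I_p)$. *)

theory Defs
  imports "HOL-Analysis.Analysis"
begin

text \<open>Matrices in R^(n x p) are rendered as real^'p^'n (rows indexed by 'n, columns by 'p).
  The Euclidean inner product and norm on this type are exactly the Frobenius ones.\<close>

definition fgrad :: "('a::euclidean_space \<Rightarrow> real) \<Rightarrow> 'a \<Rightarrow> 'a" where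
  "fgrad F x = (THE g. (F has_derivative (\<lambda>h. g \<bullet> h)) (at x))"

definition twice_cont_diff :: "('a::euclidean_space \<Rightarrow> real) \<Rightarrow> bool" where
  "twice_cont_diff F \<longleftrightarrow>
     (\<forall>x. F differentiable at x) \<and> (\<forall>x. fgrad F differentiable at x) \<and>
     (\<forall>h. continuous_on UNIV (\<lambda>x. frechet_derivative (fgrad F) (at x) h))"

definition msym :: "real^'m^'m \<Rightarrow> real^'m^'m" where
  "msym M = (1/2) *\<^sub>R (M + transpose M)"

definition mskew :: "real^'m^'m \<Rightarrow> real^'m^'m" where
  "mskew M = (1/2) *\<^sub>R (M - transpose M)"

definition Ncal :: "real^'p^'n \<Rightarrow> real" where
  "Ncal X = (1/4) * (norm (transpose X ** X - mat 1))\<^sup>2"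

definition stiefel_eps :: "real \<Rightarrow> (real^'p^'n) set" where
  "stiefel_eps \<epsilon> = {X. norm (transpose X ** X - mat 1) \<le> \<epsilon>}"

definition rgrad :: "(real^'p^'n \<Rightarrow> real) \<Rightarrow> real^'p^'n \<Rightarrow> real^'p^'n" where
  "rgrad f X = mskew (fgrad f X ** transpose X) ** X"

definition landing :: "(real^'p^'n \<Rightarrow> real) \<Rightarrow> real \<Rightarrow> real^'p^'n \<Rightarrow> real^'p^'n" where
  "landing f lam X = rgrad f X + lam *\<^sub>R (X ** (transpose X ** X - mat 1))"

definition Lcal :: "(real^'p^'n \<Rightarrow> real) \<Rightarrow> real \<Rightarrow> real^'p^'n \<Rightarrow> real" where
  "Lcal f \<mu> X = f X - (1/2) * (msym (transpose X ** fgrad f X) \<bullet> (transpose X ** X - mat 1))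
                 + \<mu> * Ncal X"

end

theory Submission
  imports Defs
begin


lemma inner_mat: "(A::real^'k^'m) \<bullet> B = (\<Sum>i\<in>UNIV. \<Sum>j\<in>UNIV. A$i$j * B$i$j)"
  by (simp add: inner_vec_def)

lemma inner_mult_right: "((A::real^'k^'m) ** (B::real^'l^'k)) \<bullet> C = A \<bullet> (C ** transpose B)"
  unfolding inner_mat matrix_matrix_mult_def transpose_def
  by (simp add: sum_distrib_left sum_distrib_right mult_ac)
   (rule sum.cong[OF refl], rule sum.swap)

lemma inner_transpose: "transpose (A::real^'k^'m) \<bullet> transpose B = A \<bullet> B"
  unfolding inner_mat transpose_def by simp (rule sum.swap)

lemma inner_mult_left: "((A::real^'k^'m) ** (B::real^'l^'k)) \<bullet> C = B \<bullet> (transpose A ** C)"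
proof -
  have "(A ** B) \<bullet> C = transpose (A ** B) \<bullet> transpose C" by (simp only: inner_transpose)
  also have "\<dots> = (transpose B ** transpose A) \<bullet> transpose C" by (simp only: matrix_transpose_mul)
  also have "\<dots> = transpose B \<bullet> (transpose C ** transpose (transpose A))" by (rule inner_mult_right)
  also have "\<dots> = transpose B \<bullet> transpose (transpose A ** C)" by (simp only: matrix_transpose_mul)
  also have "\<dots> = B \<bullet> (transpose A ** C)" by (rule inner_transpose)
  finally show ?thesis .
qed

lemma mm_add_r: "((A::real^'k^'m) + B) ** (C::real^'l^'k) = A ** C + B ** C"
  by (simp add: matrix_matrix_mult_def vec_eq_iff distrib_right sum.distrib)
lemma mm_add_l: "(A::real^'k^'m) ** ((B::real^'l^'k) + C) = A ** B + A ** C"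
  by (simp add: matrix_matrix_mult_def vec_eq_iff distrib_left sum.distrib)
lemma mm_diff_r: "((A::real^'k^'m) - B) ** (C::real^'l^'k) = A ** C - B ** C"
  by (simp add: matrix_matrix_mult_def vec_eq_iff left_diff_distrib sum_subtractf)
lemma mm_diff_l: "(A::real^'k^'m) ** ((B::real^'l^'k) - C) = A ** B - A ** C"
  by (simp add: matrix_matrix_mult_def vec_eq_iff right_diff_distrib sum_subtractf)
lemma mm_scale_r: "((k::real) *\<^sub>R (A::real^'k^'m)) ** (C::real^'l^'k) = k *\<^sub>R (A ** C)"
  by (simp add: matrix_matrix_mult_def vec_eq_iff sum_distrib_left mult_ac)
lemma mm_scale_l: "(A::real^'k^'m) ** ((k::real) *\<^sub>R (C::real^'l^'k)) = k *\<^sub>R (A ** C)"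
  by (simp add: matrix_matrix_mult_def vec_eq_iff sum_distrib_left mult_ac)
lemma mm_zero_l: "(0::real^'k^'m) ** (C::real^'l^'k) = 0"
  by (simp add: matrix_matrix_mult_def vec_eq_iff)
lemma mm_zero_r: "(A::real^'k^'m) ** (0::real^'l^'k) = 0"
  by (simp add: matrix_matrix_mult_def vec_eq_iff)
lemma tr_add: "transpose ((A::real^'k^'m) + B) = transpose A + transpose B"
  by (simp add: transpose_def vec_eq_iff)
lemma tr_diff: "transpose ((A::real^'k^'m) - B) = transpose A - transpose B"
  by (simp add: transpose_def vec_eq_iff)
lemma tr_minus: "transpose (- (A::real^'k^'m)) = - transpose A"
  by (simp add: transpose_def vec_eq_iff)
lemma tr_zero: "transpose (0::real^'k^'m) = 0"
  by (simp add: transpose_def vec_eq_iff)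

lemma norm_mm_le: "norm ((A::real^'k^'m) ** (B::real^'l^'k)) \<le> norm A * norm B"
proof -
  have e: "\<And>i l. ((A ** B) $ i $ l)\<^sup>2 \<le> (norm (A$i))\<^sup>2 * (norm (column l B))\<^sup>2"
  proof -
    fix i l
    have "(A ** B) $ i $ l = A$i \<bullet> column l B"
      by (simp add: matrix_matrix_mult_def inner_vec_def column_def)
    then have "\<bar>(A ** B) $ i $ l\<bar> \<le> norm (A$i) * norm (column l B)"
      by (simp add: Cauchy_Schwarz_ineq2)
    then have "\<bar>(A ** B) $ i $ l\<bar>\<^sup>2 \<le> (norm (A$i) * norm (column l B))\<^sup>2"
      by (rule power_mono) simp
    then show "((A ** B) $ i $ l)\<^sup>2 \<le> (norm (A$i))\<^sup>2 * (norm (column l B))\<^sup>2"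
      by (simp add: power_mult_distrib)
  qed
  have nA: "(norm A)\<^sup>2 = (\<Sum>i\<in>UNIV. (norm (A$i))\<^sup>2)"
    by (simp add: power2_norm_eq_inner inner_vec_def)
  have nB: "(norm B)\<^sup>2 = (\<Sum>l\<in>UNIV. (norm (column l B))\<^sup>2)"
  proof -
    have "(norm B)\<^sup>2 = (norm (transpose B))\<^sup>2"
      by (simp add: power2_norm_eq_inner inner_transpose)
    also have "\<dots> = (\<Sum>l\<in>UNIV. (norm (column l B))\<^sup>2)"
      by (simp add: power2_norm_eq_inner inner_vec_def transpose_def column_def)
    finally show ?thesis .
  qed
  have nAB: "(norm (A ** B))\<^sup>2 = (\<Sum>i\<in>UNIV. \<Sum>l\<in>UNIV. ((A ** B) $ i $ l)\<^sup>2)"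
    unfolding power2_norm_eq_inner inner_mat by (simp add: power2_eq_square)
  have "(norm (A ** B))\<^sup>2 \<le> (\<Sum>i\<in>UNIV. \<Sum>l\<in>UNIV. (norm (A$i))\<^sup>2 * (norm (column l B))\<^sup>2)"
    unfolding nAB by (intro sum_mono e)
  also have "\<dots> = (norm A)\<^sup>2 * (norm B)\<^sup>2"
    unfolding nA nB by (simp add: sum_distrib_left sum_distrib_right) (rule sum.swap)
  also have "\<dots> = (norm A * norm B)\<^sup>2" by (simp add: power_mult_distrib)
  finally have "(norm (A ** B))\<^sup>2 \<le> (norm A * norm B)\<^sup>2" .
  then show ?thesis
    by (rule power2_le_imp_le) simp
qed

lemma inner_sym: "transpose (C::real^'m^'m) = C \<Longrightarrow> M \<bullet> C = msym M \<bullet> C"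
proof -
  assume c: "transpose C = C"
  have "M \<bullet> C = transpose M \<bullet> C" using inner_transpose[of M C] c by simp
  thus ?thesis by (simp add: msym_def inner_add_left)
qed

lemma sym_skew: "transpose (S::real^'m^'m) = S \<Longrightarrow> transpose K = - K \<Longrightarrow> S \<bullet> K = 0"
proof -
  assume s: "transpose S = S" and k: "transpose K = - K"
  have "S \<bullet> K = transpose S \<bullet> transpose K" by (simp add: inner_transpose)
  also have "\<dots> = - (S \<bullet> K)" using s k by simp
  finally show ?thesis by linarith
qed

lemma msym_tr: "transpose (msym M) = msym M"
  by (simp add: msym_def tr_add transpose_scalar add.commute)
lemma mskew_tr: "transpose (mskew M) = - mskew M"
  by (simp add: mskew_def tr_diff transpose_scalar) (metis minus_diff_eq scaleR_minus_right)

lemma skew_self: "M \<bullet> mskew M = mskew M \<bullet> mskew M"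
proof -
  have e: "msym M + mskew M = M"
    by (simp add: msym_def mskew_def vec_eq_iff algebra_simps)
  have "M \<bullet> mskew M = (msym M + mskew M) \<bullet> mskew M" by (simp only: e)
  also have "\<dots> = msym M \<bullet> mskew M + mskew M \<bullet> mskew M" by (rule inner_add_left)
  finally show ?thesis using sym_skew[OF msym_tr mskew_tr, of M M] by linarith
qed



lemma fgrad_works:
  assumes "F differentiable at x"
  shows "(F has_derivative (\<lambda>h. fgrad F x \<bullet> h)) (at x)"
proof -
  obtain D where D: "(F has_derivative D) (at x)" using assms by (auto simp: differentiable_def)
  have lin: "linear D" using D has_derivative_linear by blast
  define g where "g = (\<Sum>i\<in>Basis. D i *\<^sub>R i)"
  have Dg: "D = (\<lambda>h. g \<bullet> h)"
  proof
    fix h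
    have "D h = D h \<bullet> 1" by simp
    also have "\<dots> = (\<Sum>i\<in>Basis. (h \<bullet> i) * (D i \<bullet> 1))" by (rule Linear_Algebra.linear_componentwise[OF lin])
    also have "\<dots> = (\<Sum>i\<in>Basis. D i * (i \<bullet> h))"
      by (intro sum.cong refl) (simp add: inner_commute[of h] mult.commute)
    also have "\<dots> = g \<bullet> h" by (simp add: g_def inner_sum_left)
    finally show "D h = g \<bullet> h" .
  qed
  have Dg': "(F has_derivative (\<lambda>h. g \<bullet> h)) (at x)" using D unfolding Dg .
  have uniq: "g' = g" if "(F has_derivative (\<lambda>h. g' \<bullet> h)) (at x)" for g'
  proof -
    have e: "(\<lambda>h. g' \<bullet> h) = (\<lambda>h. g \<bullet> h)" using Dg' that has_derivative_unique by blast
    have "g' \<bullet> (g' - g) = g \<bullet> (g' - g)" using fun_cong[OF e, of "g' - g"] by (simp only:)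
    then have "(g' - g) \<bullet> (g' - g) = 0" by (simp only: inner_diff_left diff_self)
    then show "g' = g" by simp
  qed
  have "fgrad F x = g" unfolding fgrad_def by (rule the_equality[where P="\<lambda>g. (F has_derivative (\<lambda>h. g \<bullet> h)) (at x)", OF Dg' uniq])
  thus ?thesis using Dg' by simp
qed

lemma bb_mm: "bounded_bilinear (\<lambda>(A::real^'k^'m) (B::real^'l^'k). A ** B)"
  apply unfold_locales
      apply (rule mm_add_r)
     apply (rule mm_add_l)
    apply (rule mm_scale_r)
   apply (rule mm_scale_l)
  apply (rule exI[of _ 1])
  apply (simp add: norm_mm_le)
  done

lemmas has_derivative_mm = bounded_bilinear.FDERIV[OF bb_mm]

lemma bl_tr: "bounded_linear (transpose :: real^'k^'m \<Rightarrow> real^'m^'k)"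
proof (rule bounded_linear_intro[where K=1])
  show "transpose (x + y) = transpose x + transpose y" for x y :: "real^'k^'m" by (rule tr_add)
  show "transpose (r *\<^sub>R x) = r *\<^sub>R transpose x" for r and x :: "real^'k^'m" by (rule transpose_scalar)
  show "norm (transpose x) \<le> norm x * 1" for x :: "real^'k^'m"
    by (simp add: norm_eq_sqrt_inner inner_transpose)
qed

lemma bl_msym: "bounded_linear (msym :: real^'m^'m \<Rightarrow> real^'m^'m)"
proof (rule bounded_linear_intro[where K=1])
  show "msym (x + y) = msym x + msym y" for x y :: "real^'m^'m"
    by (simp add: msym_def tr_add algebra_simps)
  show "msym (r *\<^sub>R x) = r *\<^sub>R msym x" for r and x :: "real^'m^'m"
    by (simp add: msym_def transpose_scalar scaleR_add_right)
  show "norm (msym x) \<le> norm x * 1" for x :: "real^'m^'m"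
  proof -
    have nt: "norm (transpose x) = norm x" by (simp add: norm_eq_sqrt_inner inner_transpose)
    have "norm (msym x) = (1/2) * norm (x + transpose x)" by (simp add: msym_def)
    also have "\<dots> \<le> (1/2) * (norm x + norm (transpose x))" by (simp add: norm_triangle_ineq)
    finally show ?thesis using nt by simp
  qed
qed

lemma has_derivative_tr:
  "((F::_\<Rightarrow>real^'k^'m) has_derivative F') net \<Longrightarrow> ((\<lambda>x. transpose (F x)) has_derivative (\<lambda>h. transpose (F' h))) net"
  by (rule bounded_linear.has_derivative[OF bl_tr])

lemma has_derivative_msym:
  "((F::_\<Rightarrow>real^'m^'m) has_derivative F') net \<Longrightarrow> ((\<lambda>x. msym (F x)) has_derivative (\<lambda>h. msym (F' h))) net"
  by (rule bounded_linear.has_derivative[OF bl_msym])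

thm has_derivative_mm



lemma Lcal_eq: "Lcal f \<mu> = (\<lambda>Y. f Y - (1/2) * (msym (transpose Y ** fgrad f Y) \<bullet> (transpose Y ** Y - mat 1))
   + \<mu> * ((1/4) * ((transpose Y ** Y - mat 1) \<bullet> (transpose Y ** Y - mat 1))))"
  by (rule ext) (simp only: Lcal_def Ncal_def power2_norm_eq_inner)

lemma DL_raw:
  fixes f :: "real^'p^'n \<Rightarrow> real"
  assumes f: "twice_cont_diff f"
  shows "(Lcal f \<mu> has_derivative (\<lambda>x. fgrad f X \<bullet> x -
          1 / 2 *
          (msym (transpose X ** fgrad f X) \<bullet>
           (transpose X ** x + transpose x ** X - 0) +
           msym (transpose X ** frechet_derivative (fgrad f) (at X) x +
             transpose x ** fgrad f X) \<bullet>
           (transpose X ** X - mat 1)) +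
          \<mu> *
          (1 / 4 *
           ((transpose X ** X - mat 1) \<bullet>
            (transpose X ** x + transpose x ** X - 0) +
            (transpose X ** x + transpose x ** X - 0) \<bullet>
            (transpose X ** X - mat 1))))) (at X)"
proof -
  have fd: "(f has_derivative (\<lambda>h. fgrad f X \<bullet> h)) (at X)"
    using f unfolding twice_cont_diff_def by (intro fgrad_works) blast
  have Gd: "(fgrad f has_derivative frechet_derivative (fgrad f) (at X)) (at X)"
    using f unfolding twice_cont_diff_def frechet_derivative_works by blast
  show ?thesis
    unfolding Lcal_eq
    apply (rule has_derivative_eq_rhs)
    apply (rule has_derivative_add)
    apply (rule has_derivative_diff)
    apply (rule fd)
    apply (rule has_derivative_mult_right)
    apply (rule has_derivative_inner)
    apply (rule has_derivative_msym)
    apply (rule has_derivative_mm)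
    apply (rule has_derivative_tr)
    apply (rule has_derivative_ident)
    apply (rule Gd)
    apply (rule has_derivative_diff)
    apply (rule has_derivative_mm)
    apply (rule has_derivative_tr)
    apply (rule has_derivative_ident)
    apply (rule has_derivative_ident)
    apply (rule has_derivative_const)
    apply (rule has_derivative_mult_right)
    apply (rule has_derivative_mult_right)
    apply (rule has_derivative_inner)
    apply (rule has_derivative_diff)
    apply (rule has_derivative_mm)
    apply (rule has_derivative_tr)
    apply (rule has_derivative_ident)
    apply (rule has_derivative_ident)
    apply (rule has_derivative_const)
    apply (rule has_derivative_diff)
    apply (rule has_derivative_mm)
    apply (rule has_derivative_tr)
    apply (rule has_derivative_ident)
    apply (rule has_derivative_ident)
    apply (rule has_derivative_const)
    apply (rule refl)
    done
qed

lemma DL_value: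
  fixes f :: "real^'p^'n \<Rightarrow> real" and X V :: "real^'p^'n" and \<mu> :: real
  assumes f: "twice_cont_diff f"
  defines "C \<equiv> transpose X ** X - mat 1" and "G \<equiv> fgrad f X"
    and "H \<equiv> frechet_derivative (fgrad f) (at X)"
    and "\<psi> \<equiv> msym (transpose X ** fgrad f X)"
  shows "fgrad (Lcal f \<mu>) X \<bullet> V = G \<bullet> V - (1/2) * (G \<bullet> (V ** C)) - (1/2) * (H V \<bullet> (X ** C))
     - \<psi> \<bullet> (transpose X ** V) + \<mu> * (C \<bullet> (transpose X ** V))"
proof -
  note LD = DL_raw[OF f, of \<mu> X]
  have "Lcal f \<mu> differentiable at X" using LD by (auto simp: differentiable_def)
  from fgrad_works[OF this] have "(\<lambda>h. fgrad (Lcal f \<mu>) X \<bullet> h) = (\<lambda>x. fgrad f X \<bullet> x -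
          1 / 2 *
          (msym (transpose X ** fgrad f X) \<bullet>
           (transpose X ** x + transpose x ** X - 0) +
           msym (transpose X ** frechet_derivative (fgrad f) (at X) x +
             transpose x ** fgrad f X) \<bullet>
           (transpose X ** X - mat 1)) +
          \<mu> *
          (1 / 4 *
           ((transpose X ** X - mat 1) \<bullet>
            (transpose X ** x + transpose x ** X - 0) +
            (transpose X ** x + transpose x ** X - 0) \<bullet>
            (transpose X ** X - mat 1))))"
    using LD has_derivative_unique by blast
  from fun_cong[OF this, of V]
  have raw: "fgrad (Lcal f \<mu>) X \<bullet> V = G \<bullet> V -
          1 / 2 * (\<psi> \<bullet> (transpose X ** V + transpose V ** X - 0) +
           msym (transpose X ** H V + transpose V ** G) \<bullet> C) +
          \<mu> * (1 / 4 * (C \<bullet> (transpose X ** V + transpose V ** X - 0) +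
            (transpose X ** V + transpose V ** X - 0) \<bullet> C))"
    unfolding C_def G_def H_def \<psi>_def by (simp only:)
  have Cs: "transpose C = C" unfolding C_def by (simp add: tr_diff matrix_transpose_mul)
  have ps: "transpose \<psi> = \<psi>" unfolding \<psi>_def by (rule msym_tr)
  have tvx: "transpose (transpose V ** X) = transpose X ** V" by (simp add: matrix_transpose_mul)
  have a1: "\<psi> \<bullet> (transpose V ** X) = \<psi> \<bullet> (transpose X ** V)"
    using inner_transpose[of \<psi> "transpose V ** X"] ps tvx by simp
  have a2: "C \<bullet> (transpose V ** X) = C \<bullet> (transpose X ** V)"
    using inner_transpose[of C "transpose V ** X"] Cs tvx by simp
  have e1: "\<psi> \<bullet> (transpose X ** V + transpose V ** X - 0) = 2 * (\<psi> \<bullet> (transpose X ** V))"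
    by (simp only: diff_zero inner_add_right a1 mult_2)
  have e3: "C \<bullet> (transpose X ** V + transpose V ** X - 0) = 2 * (C \<bullet> (transpose X ** V))"
    by (simp only: diff_zero inner_add_right a2 mult_2)
  have e4: "(transpose X ** V + transpose V ** X - 0) \<bullet> C = 2 * (C \<bullet> (transpose X ** V))"
    using e3 by (simp only: inner_commute[of _ C])
  have e2: "msym (transpose X ** H V + transpose V ** G) \<bullet> C = H V \<bullet> (X ** C) + G \<bullet> (V ** C)"
  proof -
    have "msym (transpose X ** H V + transpose V ** G) \<bullet> C = (transpose X ** H V + transpose V ** G) \<bullet> C"
      using inner_sym[OF Cs] by simp
    also have "\<dots> = (transpose X ** H V) \<bullet> C + (transpose V ** G) \<bullet> C" by (rule inner_add_left)
    also have "\<dots> = H V \<bullet> (X ** C) + G \<bullet> (V ** C)"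
      by (simp only: inner_mult_left transpose_transpose)
    finally show ?thesis .
  qed
  show ?thesis unfolding raw e1 e2 e3 e4 by (simp add: algebra_simps)
qed



lemma C_deriv: "((\<lambda>Y::real^'p^'n. transpose Y ** Y - mat 1) has_derivative
   (\<lambda>h. transpose Y ** h + transpose h ** Y - 0)) (at Y within s)"
  apply (rule has_derivative_diff)
   apply (rule has_derivative_mm)
    apply (rule has_derivative_tr)
    apply (rule has_derivative_ident)
   apply (rule has_derivative_ident)
  apply (rule has_derivative_const)
  done

lemma g_cont: "isCont (\<lambda>Y::real^'p^'n. norm (transpose Y ** Y - mat 1)) Y"
  by (rule continuous_norm) (rule has_derivative_continuous[OF C_deriv])

lemma hess_interior:
  fixes f :: "real^'p^'n \<Rightarrow> real" and Y V :: "real^'p^'n"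
  assumes f: "twice_cont_diff f"
    and L: "L-lipschitz_on (stiefel_eps \<epsilon>) (fgrad f)"
    and Y: "norm (transpose Y ** Y - mat 1) < \<epsilon>"
  shows "norm (frechet_derivative (fgrad f) (at Y) V) \<le> L * norm V"
proof -
  define G where "G = fgrad f"
  define H where "H = frechet_derivative (fgrad f) (at Y)"
  have Gd: "(G has_derivative H) (at Y)"
    using f unfolding twice_cont_diff_def frechet_derivative_works G_def H_def by blast
  have lin: "linear H" using Gd has_derivative_linear by blast
  show ?thesis
  proof (cases "V = 0")
    case True
    then show ?thesis using lin unfolding H_def by (simp add: linear_0)
  next
    case False
    then have nV: "norm V > 0" by simp
    have "norm (H V) \<le> L * norm V + e" if e: "e > 0" for e
    proof -
      define e' where "e' = e / norm V"
      have e': "e' > 0" using e nV unfolding e'_def by simp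
      have lim: "(\<lambda>h. norm (G (Y + h) - G Y - H h) / norm h) \<midarrow>0\<rightarrow> 0"
        using Gd unfolding has_derivative_at by blast
      obtain s1 where s1: "s1 > 0" and
        hs1: "\<And>h. h \<noteq> 0 \<and> norm (h - 0) < s1 \<Longrightarrow> norm (norm (G (Y + h) - G Y - H h) / norm h - 0) < e'"
        using LIM_D[OF lim e'] by blast
      have glim: "(\<lambda>Z. norm (transpose Z ** Z - mat 1)) \<midarrow>Y\<rightarrow> norm (transpose Y ** Y - mat 1)"
        using g_cont[of Y] unfolding isCont_def .
      obtain s2 where s2: "s2 > 0" and
        hs2: "\<And>Z. Z \<noteq> Y \<and> norm (Z - Y) < s2 \<Longrightarrow>
           norm (norm (transpose Z ** Z - mat 1) - norm (transpose Y ** Y - mat 1)) < \<epsilon> - norm (transpose Y ** Y - mat 1)"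
        using LIM_D[OF glim, of "\<epsilon> - norm (transpose Y ** Y - mat 1)"] Y by auto
      define t where "t = min s1 s2 / (2 * norm V)"
      have t: "t > 0" using s1 s2 nV unfolding t_def by simp
      define h where "h = t *\<^sub>R V"
      have nh: "norm h = min s1 s2 / 2" unfolding h_def t_def using nV t s1 s2 by simp
      have h0: "h \<noteq> 0" unfolding h_def using t False by simp
      have hs1': "norm h < s1" "norm h < s2" using nh s1 s2 by auto
      have q: "norm (G (Y + h) - G Y - H h) / norm h < e'"
        using hs1[of h] h0 hs1' by simp
      then have q': "norm (G (Y + h) - G Y - H h) \<le> e' * norm h"
        using h0 by (simp add: divide_less_eq less_imp_le)
      have YS: "Y \<in> stiefel_eps \<epsilon>" using Y unfolding stiefel_eps_def by simp
      have "Y + h \<noteq> Y \<and> norm (Y + h - Y) < s2" using h0 hs1' by simp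
      from hs2[OF this]
      have "norm (transpose (Y + h) ** (Y + h) - mat 1) < \<epsilon>"
        unfolding real_norm_def by linarith
      then have YhS: "Y + h \<in> stiefel_eps \<epsilon>" unfolding stiefel_eps_def by simp
      have lip: "norm (G (Y + h) - G Y) \<le> L * norm h"
        using lipschitz_onD[OF L YhS YS] unfolding G_def by (simp add: dist_norm)
      have "norm (H h) \<le> norm (G (Y + h) - G Y) + norm (G (Y + h) - G Y - H h)"
        by (rule order_trans[OF _ norm_triangle_ineq4]) simp
      also have "\<dots> \<le> L * norm h + e' * norm h" using lip q' by simp
      finally have "norm (H h) \<le> (L + e') * norm h" by (simp add: algebra_simps)
      moreover have "H h = t *\<^sub>R H V" unfolding h_def using lin by (simp add: linear_scale)
      ultimately have "t * norm (H V) \<le> (L + e') * (t * norm V)"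
        unfolding h_def using t by simp
      then have "t * norm (H V) \<le> t * ((L + e') * norm V)" by (simp only: mult.left_commute)
      then have "norm (H V) \<le> (L + e') * norm V" using t by (rule mult_le_cancel_left_pos[THEN iffD1, rotated])
      also have "\<dots> = L * norm V + e" unfolding e'_def using nV by (simp add: algebra_simps)
      finally show ?thesis .
    qed
    then have "norm (H V) \<le> L * norm V" by (rule field_le_epsilon)
    then show ?thesis unfolding H_def .
  qed
qed



lemma quad_nonneg:
  fixes A B D w :: real
  assumes "A > 0" "B^2 \<le> 4* A* D"
  shows "A* w^2 - B* w + D \<ge> 0"
proof -
  have "4* A*(A* w^2 - B* w + D) = (2* A* w - B)^2 + (4* A* D - B^2)"
    by (simp add: algebra_simps power2_eq_square)
  also have "\<dots> \<ge> 0" using assms by simp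
  finally have "4* A*(A* w^2 - B* w + D) \<ge> 0" .
  then show ?thesis using assms(1) by (simp add: zero_le_mult_iff)
qed

lemma uv_aux: fixes u v L2 c2 :: real
  shows "u \<noteq> 0 \<Longrightarrow> v \<noteq> 0 \<Longrightarrow> 4*(v/(2* u))*(L2* u^2* c2/(2* v)) = L2* u* c2"
  by (simp add: field_simps power2_eq_square)

lemma final_arith:
  fixes lam eps L Lh mu s c w x om t1 t2 t3 t4 :: real
  assumes lam: "lam > 0" and e0: "0 < eps" and e1: "eps < 3/4" and L: "L > 0" "L \<le> Lh"
    and s: "s \<ge> 0" and c: "0 \<le> c" "c \<le> eps" and w: "w \<ge> 0" and x: "x \<ge> 0"
    and x1: "x^2 \<le> (1+eps)* c^2" and x2: "x^2 \<ge> (1-eps)* c^2" and om: "w^2 \<le> (1+eps)* om"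
    and t1: "\<bar>t1\<bar> \<le> Lh* w* c" and t2: "\<bar>t2\<bar> \<le> Lh* w* x" and t3: "t3 \<le> s* c^2" and t4: "t4 \<le> L* x^2"
    and mu: "mu \<ge> 2/(3-4* eps) * (L*(1-eps) + 3* s + Lh^2*(1+eps)^2/(lam*(1-eps)))"
  shows "om - (1/2)* t1 - (1/2)* t2 + lam*(-(3/2)* t3 - (1/2)* t4 + mu* x^2) \<ge> (1/2)* w^2 + lam* mu*((1/4)* c^2)"
proof -
  define Q where "Q = Lh^2*(1+eps)^2/(lam*(1-eps))"
  have Q0: "Q \<ge> 0" unfolding Q_def using lam e1 by simp
  have d: "3 - 4* eps > 0" using e1 by simp
  have mu': "mu * (3 - 4* eps) \<ge> 2 * (L*(1-eps) + 3* s + Q)"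
    using mu d unfolding Q_def by (simp add: field_simps)
  have muL: "mu - L/2 \<ge> 0"
  proof -
    have "2 * (L*(1-eps) + 3* s + Q) \<ge> 2* L*(1-eps)" using s Q0 by simp
    then have "mu * (3 - 4* eps) \<ge> (L/2) * (3 - 4* eps)" using mu' L e1 by (simp add: algebra_simps) 
    then show ?thesis using d by (simp add: mult_le_cancel_right)
  qed
  have lampart: "-(3/2)* t3 - (1/2)* t4 + mu* x^2 \<ge> -(3/2)* s* c^2 + (mu - L/2)*((1-eps)* c^2)"
  proof -
    have "(mu - L/2)* x^2 \<ge> (mu - L/2)*((1-eps)* c^2)" using x2 muL by (rule mult_left_mono)
    then show ?thesis using t3 t4 by (simp add: algebra_simps)
  qed
  have k1: "mu*(3-4* eps) = 3* mu - 4*(mu* eps)" by (simp add: algebra_simps)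
  have k2: "(mu - L/2)*(1-eps) = mu - mu* eps - L/2 + (L* eps)/2" by (simp add: field_simps)
  have k3: "L*(1-eps) = L - L* eps" by (simp add: algebra_simps)
  have key: "-(3/2)* s + (mu - L/2)*(1-eps) - mu/4 \<ge> Q/2"
  proof -
    have "4 * (-(3/2)* s + (mu - L/2)*(1-eps) - mu/4) = mu*(3-4* eps) - 6* s - 2*(L*(1-eps))"
      by (simp add: field_simps)
    moreover have "\<And>a b c. 4*(-(3/2)* s + a - mu/4) = b - 6* s - 2* c \<Longrightarrow> 2*(c + 3* s + Q) \<le> b
       \<Longrightarrow> Q/2 \<le> -(3/2)* s + a - mu/4" by argo
    ultimately show ?thesis using mu' by blast
  qed
  have lp: "lam*(-(3/2)* t3 - (1/2)* t4 + mu* x^2) - lam* mu*((1/4)* c^2) \<ge> lam* c^2*(Q/2)"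
  proof -
    have "lam*(-(3/2)* t3 - (1/2)* t4 + mu* x^2) \<ge> lam*(-(3/2)* s* c^2 + (mu - L/2)*((1-eps)* c^2))"
      using lampart lam by (simp add: mult_left_mono)
    moreover have "lam*(-(3/2)* s* c^2 + (mu - L/2)*((1-eps)* c^2)) - lam* mu*((1/4)* c^2)
        = lam* c^2*(-(3/2)* s + (mu - L/2)*(1-eps) - mu/4)" by (simp add: field_simps)
    moreover have "lam* c^2*(-(3/2)* s + (mu - L/2)*(1-eps) - mu/4) \<ge> lam* c^2*(Q/2)"
      using key lam by (simp add: mult_left_mono)
    ultimately show ?thesis by linarith
  qed
  have lq: "lam* c^2*(Q/2) = Lh^2*(1+eps)^2* c^2/(2*(1-eps))"
    unfolding Q_def using lam e1 by (simp add: field_simps power2_eq_square)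
  define A where "A = (1-eps)/(2*(1+eps))"
  define B where "B = (1/2)* Lh*(c + x)"
  define Dd where "Dd = Lh^2*(1+eps)^2* c^2/(2*(1-eps))"
  have A0: "A > 0" unfolding A_def using e0 e1 by simp
  have cx: "(c + x)^2 \<le> 4*(1+eps)* c^2"
  proof -
    have "2*(c^2+x^2) - (c+x)^2 = (c-x)^2" by (simp add: power2_eq_square algebra_simps)
    moreover have "(c-x)^2 \<ge> 0" by simp
    ultimately have "(c + x)^2 \<le> 2*(c^2 + x^2)" by linarith
    moreover have "x^2 \<le> c^2 + eps* c^2" using x1 by (simp add: algebra_simps)
    moreover have "eps* c^2 \<ge> 0" using e0 by simp
    moreover have "4*(1+eps)* c^2 = 4* c^2 + 4*(eps* c^2)" by (simp add: algebra_simps)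
    ultimately show ?thesis by argo
  qed
  have ne: "1 - eps \<noteq> 0" "1 + eps \<noteq> 0" using e0 e1 by auto
  have "4* A* Dd = Lh^2*(1+eps)* c^2" unfolding A_def Dd_def
    using uv_aux[OF ne(2) ne(1), of "Lh^2" "c^2"] by simp
  moreover have "B^2 = (1/4)* Lh^2*(c+x)^2" unfolding B_def by (simp add: power2_eq_square)
  moreover have "(1/4)* Lh^2*(c+x)^2 \<le> Lh^2*(1+eps)* c^2"
    using mult_left_mono[OF cx, of "Lh^2/4"] by (simp add: algebra_simps)
  ultimately have BB: "B^2 \<le> 4* A* Dd" by simp
  have q: "A* w^2 - B* w + Dd \<ge> 0" by (rule quad_nonneg[OF A0 BB])
  have omw: "om \<ge> w^2/(1+eps)" using om e0 by (simp add: field_simps)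
  have "w^2/(1+eps) - (1/2)* w^2 = A* w^2" unfolding A_def using e0 by (simp add: field_simps)
  have tt: "(1/2)* t1 + (1/2)* t2 \<le> B* w"
  proof -
    have "t1 \<le> Lh* w* c" "t2 \<le> Lh* w* x" using t1 t2 by auto
    then show ?thesis unfolding B_def by (simp add: algebra_simps)
  qed
  have "om - (1/2)* t1 - (1/2)* t2 - (1/2)* w^2 \<ge> A* w^2 - B* w"
    using omw tt \<open>w^2/(1+eps) - (1/2)* w^2 = A* w^2\<close> by linarith
  then show ?thesis using lp lq q unfolding Dd_def by linarith
qed



lemma poly_aux: fixes t a d1 d2 d3 d4 :: real
  assumes "0 < t" "t < 1" "d1 \<ge> 0" "d4 \<ge> 0" "a > 0" "t * (4*d1 + 2*\<bar>d2\<bar> + 4*\<bar>d3\<bar> + d4 + 1) < 4*a"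
  shows "- 4*t*a + 4*t^2*d1 + 2*t^2*d2 - 4*t^3*d3 + t^4*d4 < 0"
proof -
  have t2: "t^2 > 0" using assms by simp
  have a1: "t^3 * \<bar>d3\<bar> \<le> t^2 * \<bar>d3\<bar>"
    by (rule mult_right_mono) (use assms in \<open>simp_all add: power_decreasing\<close>)
  have a2': "- (t^3 * d3) \<le> \<bar>t^3 * d3\<bar>" by (rule abs_ge_minus_self)
  have "\<bar>t^3 * d3\<bar> = t^3 * \<bar>d3\<bar>" using assms by (simp add: abs_mult)
  with a2' have a2: "- (t^3 * d3) \<le> t^3 * \<bar>d3\<bar>" by simp
  have a3: "t^4 * d4 \<le> t^2 * d4"
    by (rule mult_right_mono) (use assms in \<open>simp_all add: power_decreasing\<close>)
  have a4: "t^2 * d2 \<le> t^2 * \<bar>d2\<bar>" using t2 by (simp add: mult_left_mono)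
  have "- 4*t*a + 4*t^2*d1 + 2*t^2*d2 - 4*t^3*d3 + t^4*d4 \<le> - 4*t*a + t^2 * (4*d1 + 2*\<bar>d2\<bar> + 4*\<bar>d3\<bar> + d4)"
    using a1 a2 a3 a4 by (simp add: algebra_simps)
  also have "\<dots> = t * (- 4*a + t * (4*d1 + 2*\<bar>d2\<bar> + 4*\<bar>d3\<bar> + d4))" by (simp add: algebra_simps power2_eq_square)
  also have "\<dots> < 0"
  proof (rule mult_pos_neg)
    show "0 < t" by fact
    have "t * (4*d1 + 2*\<bar>d2\<bar> + 4*\<bar>d3\<bar> + d4) < t * (4*d1 + 2*\<bar>d2\<bar> + 4*\<bar>d3\<bar> + d4 + 1)"
      using assms by simp
    then show "- 4*a + t * (4*d1 + 2*\<bar>d2\<bar> + 4*\<bar>d3\<bar> + d4) < 0" using assms(6) by linarith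
  qed
  finally show ?thesis .
qed

lemma vec_id:
  fixes C I P Q :: "'a::real_vector"
  shows "(C + I) - t *\<^sub>R (P + C) - t *\<^sub>R (P + C) + s *\<^sub>R Q - I = C - (2*t) *\<^sub>R (C + P) + s *\<^sub>R Q"
proof -
  have "(2*t) *\<^sub>R (C + P) = t *\<^sub>R (C + P) + t *\<^sub>R (C + P)" by (metis mult_2 scaleR_left_distrib)
  then show ?thesis by (simp add: algebra_simps)
qed

lemma Ct_formula:
  fixes X :: "real^'p^'n" and t :: real
  defines "C \<equiv> transpose X ** X - mat 1"
  shows "transpose (X - t *\<^sub>R (X ** C)) ** (X - t *\<^sub>R (X ** C)) - mat 1
     = C - (2*t) *\<^sub>R (C + C ** C) + (t*t) *\<^sub>R (C ** (C + C ** C))"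
proof -
  have Cs: "transpose C = C" unfolding C_def by (simp add: tr_diff matrix_transpose_mul)
  have M: "transpose X ** X = C + mat 1" unfolding C_def by simp
  have tr: "transpose (X - t *\<^sub>R (X ** C)) = transpose X - t *\<^sub>R (C ** transpose X)"
    by (simp add: tr_diff transpose_scalar matrix_transpose_mul Cs)
  have "(transpose X - t *\<^sub>R (C ** transpose X)) ** (X - t *\<^sub>R (X ** C))
      = transpose X ** X - t *\<^sub>R (transpose X ** (X ** C)) - t *\<^sub>R ((C ** transpose X) ** X)
        + (t*t) *\<^sub>R ((C ** transpose X) ** (X ** C))"
    by (simp add: mm_diff_l mm_diff_r mm_scale_l mm_scale_r algebra_simps)
  also have "transpose X ** X = C + mat 1" by (rule M)
  also have "transpose X ** (X ** C) = C ** C + C"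
    by (simp add: matrix_mul_assoc M mm_add_r)
  also have "(C ** transpose X) ** X = C ** C + C"
    by (simp add: matrix_mul_assoc[symmetric] M mm_add_l)
  also have "(C ** transpose X) ** (X ** C) = C ** (C ** C + C)"
  proof -
    have "(C ** transpose X) ** (X ** C) = C ** ((transpose X ** X) ** C)"
      by (simp add: matrix_mul_assoc)
    also have "\<dots> = C ** (C ** C + C)" by (simp add: M mm_add_r)
    finally show ?thesis .
  qed
  finally have eq: "(transpose X - t *\<^sub>R (C ** transpose X)) ** (X - t *\<^sub>R (X ** C)) =
    (C + mat 1) - t *\<^sub>R (C ** C + C) - t *\<^sub>R (C ** C + C) + (t*t) *\<^sub>R (C ** (C ** C + C))" .
  have "C ** (C ** C + C) = C ** (C + C ** C)" by (simp only: add.commute)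
  then show ?thesis unfolding tr eq using vec_id[of C "mat 1" t "C ** C" "t*t" "C ** (C + C ** C)"]
    by simp
qed

lemma Ct_decrease:
  fixes C :: "real^'p^'p"
  assumes C0: "C \<noteq> 0" and C1: "norm C < 1"
  shows "\<exists>b>0. \<forall>t>0. t < b \<longrightarrow>
     norm (C - (2*t) *\<^sub>R (C + C ** C) + (t*t) *\<^sub>R (C ** (C + C ** C))) < norm C"
proof -
  define D where "D = C + C ** C"
  define E where "E = C ** D"
  define a where "a = C \<bullet> D"
  define K where "K = 4 * (D \<bullet> D) + 2 * \<bar>C \<bullet> E\<bar> + 4 * \<bar>D \<bullet> E\<bar> + E \<bullet> E"
  have nC: "norm C > 0" using C0 by simp
  have "\<bar>C \<bullet> (C ** C)\<bar> \<le> norm C * norm (C ** C)" by (rule Cauchy_Schwarz_ineq2)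
  also have "\<dots> \<le> norm C * (norm C * norm C)" using norm_mm_le[of C C] nC by (simp add: mult_left_mono)
  finally have cs: "\<bar>C \<bullet> (C ** C)\<bar> \<le> norm C * (norm C * norm C)" .
  have "a = norm C * norm C + C \<bullet> (C ** C)"
    unfolding a_def D_def by (simp add: inner_add_right norm_eq_sqrt_inner)
  then have "a \<ge> norm C * norm C - norm C * (norm C * norm C)" using cs by linarith
  moreover have "norm C * norm C - norm C * (norm C * norm C) = (norm C * norm C) * (1 - norm C)"
    by (simp add: algebra_simps)
  moreover have "(norm C * norm C) * (1 - norm C) > 0" using nC C1 by simp
  ultimately have a: "a > 0" by linarith
  have K0: "K \<ge> 0" unfolding K_def by simp
  define b where "b = min 1 (4 * a / (K + 1))"
  have b: "b > 0" unfolding b_def using a K0 by simp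
  have "norm (C - (2*t) *\<^sub>R D + (t*t) *\<^sub>R E) < norm C" if t: "t > 0" "t < b" for t
  proof -
    have t1: "t < 1" using t unfolding b_def by simp
    have "t < 4 * a / (K + 1)" using t unfolding b_def by simp
    then have tK: "t * (K + 1) < 4 * a" using K0 by (simp add: field_simps)
    have exp: "(C - (2*t) *\<^sub>R D + (t*t) *\<^sub>R E) \<bullet> (C - (2*t) *\<^sub>R D + (t*t) *\<^sub>R E)
       = C \<bullet> C + (- 4*t*a + 4*t^2*(D \<bullet> D) + 2*t^2*(C \<bullet> E) - 4*t^3*(D \<bullet> E) + t^4*(E \<bullet> E))"
      unfolding a_def
      by (simp add: inner_add_left inner_add_right inner_diff_left inner_diff_right inner_scaleR_left inner_scaleR_right inner_commute[of D C]
          inner_commute[of E C] inner_commute[of E D] algebra_simps power2_eq_square power3_eq_cube power4_eq_xxxx)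
    have "- 4*t*a + 4*t^2*(D \<bullet> D) + 2*t^2*(C \<bullet> E) - 4*t^3*(D \<bullet> E) + t^4*(E \<bullet> E) < 0"
      by (rule poly_aux) (use t t1 a tK in \<open>simp_all add: K_def algebra_simps\<close>)
    then have "(C - (2*t) *\<^sub>R D + (t*t) *\<^sub>R E) \<bullet> (C - (2*t) *\<^sub>R D + (t*t) *\<^sub>R E) < C \<bullet> C"
      unfolding exp by linarith
    then show ?thesis unfolding norm_eq_sqrt_inner by (rule real_sqrt_less_mono)
  qed
  then show ?thesis unfolding D_def E_def using b by blast
qed

lemma hess_bound:
  fixes f :: "real^'p^'n \<Rightarrow> real" and X V :: "real^'p^'n"
  assumes f: "twice_cont_diff f" and eps0: "0 < \<epsilon>" and eps1: "\<epsilon> < 1"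
    and L: "L-lipschitz_on (stiefel_eps \<epsilon>) (fgrad f)" and X: "X \<in> stiefel_eps \<epsilon>"
  shows "norm (frechet_derivative (fgrad f) (at X) V) \<le> L * norm V"
proof -
  define C where "C = transpose X ** X - mat 1"
  have nC: "norm C \<le> \<epsilon>" using X unfolding stiefel_eps_def C_def by simp
  show ?thesis
  proof (cases "norm C < \<epsilon>")
    case True
    then show ?thesis using hess_interior[OF f L] unfolding C_def by blast
  next
    case False
    then have nCe: "norm C = \<epsilon>" using nC by simp
    then have C0: "C \<noteq> 0" using eps0 by auto
    have C1: "norm C < 1" using nCe eps1 by simp
    obtain b where b: "b > 0" and hb: "\<And>t. t > 0 \<Longrightarrow> t < b \<Longrightarrow>
       norm (C - (2*t) *\<^sub>R (C + C ** C) + (t*t) *\<^sub>R (C ** (C + C ** C))) < norm C"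
      using Ct_decrease[OF C0 C1] by blast
    define Xt where "Xt = (\<lambda>t. X - t *\<^sub>R (X ** C))"
    have ev: "eventually (\<lambda>t. norm (frechet_derivative (fgrad f) (at (Xt t)) V) \<le> L * norm V) (at_right 0)"
      unfolding eventually_at_right_field
    proof (intro exI[of _ b] conjI allI impI)
      show "(0::real) < b" by (rule b)
      fix y :: real assume y: "0 < y" "y < b"
      have "transpose (Xt y) ** Xt y - mat 1 = C - (2*y) *\<^sub>R (C + C ** C) + (y*y) *\<^sub>R (C ** (C + C ** C))"
        unfolding Xt_def C_def by (rule Ct_formula)
      then have "norm (transpose (Xt y) ** Xt y - mat 1) < \<epsilon>" using hb[OF y] nCe by simp
      then show "norm (frechet_derivative (fgrad f) (at (Xt y)) V) \<le> L * norm V"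
        by (rule hess_interior[OF f L])
    qed
    have hc: "continuous_on UNIV (\<lambda>x. frechet_derivative (fgrad f) (at x) V)"
      using f unfolding twice_cont_diff_def by blast
    then have ic: "isCont (\<lambda>x. frechet_derivative (fgrad f) (at x) V) X"
      by (simp add: continuous_on_eq_continuous_at)
    have xt: "(Xt \<longlongrightarrow> X) (at_right 0)"
    proof -
      have "((\<lambda>t. X - t *\<^sub>R (X ** C)) \<longlongrightarrow> X - (0::real) *\<^sub>R (X ** C)) (at_right 0)"
        by (intro tendsto_intros)
      then show ?thesis unfolding Xt_def by simp
    qed
    have lim: "((\<lambda>t. norm (frechet_derivative (fgrad f) (at (Xt t)) V)) \<longlongrightarrow>
        norm (frechet_derivative (fgrad f) (at X) V)) (at_right 0)"
      by (rule tendsto_norm) (rule isCont_tendsto_compose[OF ic xt])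
    show ?thesis
      by (rule tendsto_upperbound[OF lim ev]) simp
  qed
qed



lemma S_compact: "compact (stiefel_eps \<epsilon> :: (real^'p^'n) set)"
proof -
  have cl: "closed (stiefel_eps \<epsilon> :: (real^'p^'n) set)"
    unfolding stiefel_eps_def
    by (rule closed_Collect_le) (auto intro: continuous_at_imp_continuous_on g_cont)
  define I where "I = (mat 1 :: real^'p^'p)"
  have bd: "\<forall>X\<in>stiefel_eps \<epsilon>. norm (X :: real^'p^'n) \<le> 1 + (norm I * \<epsilon> + norm I * norm I)"
  proof
    fix X :: "real^'p^'n" assume X: "X \<in> stiefel_eps \<epsilon>"
    define C where "C = transpose X ** X - mat 1"
    have nC: "norm C \<le> \<epsilon>" using X unfolding stiefel_eps_def C_def by simp
    have "X \<bullet> X = (X ** mat 1) \<bullet> X" by simp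
    also have "\<dots> = I \<bullet> (transpose X ** X)" unfolding I_def by (rule inner_mult_left)
    also have "\<dots> = I \<bullet> C + I \<bullet> I" unfolding C_def I_def by (simp add: inner_diff_right)
    also have "\<dots> \<le> norm I * norm C + norm I * norm I"
      using Cauchy_Schwarz_ineq2[of I C] Cauchy_Schwarz_ineq2[of I I] by linarith
    also have "\<dots> \<le> norm I * \<epsilon> + norm I * norm I" using nC by (simp add: mult_left_mono)
    finally have xx: "X \<bullet> X \<le> norm I * \<epsilon> + norm I * norm I" .
    have "norm X \<le> 1 + (norm X)^2"
    proof (cases "norm X \<le> 1")
      case True then show ?thesis by (smt (verit) zero_le_power2)
    next
      case False
      then have "norm X \<le> norm X * norm X" by (simp add: mult_le_cancel_left1)
      then show ?thesis by (simp add: power2_eq_square)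
    qed
    also have "(norm X)^2 = X \<bullet> X" by (simp add: power2_norm_eq_inner)
    finally show "norm X \<le> 1 + (norm I * \<epsilon> + norm I * norm I)" using xx by linarith
  qed
  have "bounded (stiefel_eps \<epsilon> :: (real^'p^'n) set)"
    unfolding bounded_iff using bd by blast
  then show ?thesis using cl by (simp add: compact_eq_bounded_closed)
qed

lemma bdd_cont:
  fixes F :: "'a::metric_space \<Rightarrow> 'b::real_normed_vector"
  assumes "compact S" "continuous_on S F"
  shows "bdd_above ((\<lambda>X. norm (F X)) ` S)"
proof -
  have "compact (F ` S)" using assms by (rule compact_continuous_image[rotated])
  then have "bounded (F ` S)" by (rule compact_imp_bounded)
  then obtain B where B: "\<forall>y\<in>F ` S. norm y \<le> B" unfolding bounded_iff by blast
  show ?thesis by (rule bdd_aboveI2[where M=B]) (use B in auto)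
qed

lemma G_cont:
  fixes f :: "real^'p^'n \<Rightarrow> real"
  assumes f: "twice_cont_diff f"
  shows "continuous_on S (fgrad f)"
  using f unfolding twice_cont_diff_def
  by (intro continuous_at_imp_continuous_on ballI differentiable_imp_continuous_within) blast

lemma psi_cont:
  fixes f :: "real^'p^'n \<Rightarrow> real"
  assumes f: "twice_cont_diff f"
  shows "continuous_on S (\<lambda>Y. msym (transpose Y ** fgrad f Y))"
proof (intro continuous_at_imp_continuous_on ballI)
  fix Y :: "real^'p^'n"
  have Gd: "(fgrad f has_derivative frechet_derivative (fgrad f) (at Y)) (at Y)"
    using f unfolding twice_cont_diff_def frechet_derivative_works by blast
  have "((\<lambda>Y. msym (transpose Y ** fgrad f Y)) has_derivative
     (\<lambda>h. msym (transpose Y ** frechet_derivative (fgrad f) (at Y) h + transpose h ** fgrad f Y))) (at Y)"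
    apply (rule has_derivative_msym)
    apply (rule has_derivative_mm)
     apply (rule has_derivative_tr)
     apply (rule has_derivative_ident)
    apply (rule Gd)
    done
  then show "isCont (\<lambda>Y. msym (transpose Y ** fgrad f Y)) Y" by (rule has_derivative_continuous)
qed

lemma W_bound:
  fixes Om :: "real^'n^'n" and X :: "real^'p^'n"
  assumes nC: "norm (transpose X ** X - mat 1) \<le> \<epsilon>"
  shows "(norm (Om ** X))^2 \<le> (1 + \<epsilon>) * (Om \<bullet> Om)"
proof -
  define W where "W = Om ** X"
  define C where "C = transpose X ** X - mat 1"
  have M: "transpose X ** X = C + mat 1" unfolding C_def by simp
  have w2: "(norm W)^2 = W \<bullet> W" by (simp add: power2_norm_eq_inner)
  have h1: "W \<bullet> W \<le> norm Om * norm (W ** transpose X)"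
  proof -
    have "W \<bullet> W = Om \<bullet> (W ** transpose X)" unfolding W_def by (rule inner_mult_right)
    also have "\<dots> \<le> norm Om * norm (W ** transpose X)" by (rule norm_cauchy_schwarz)
    finally show ?thesis .
  qed
  have h2: "(norm (W ** transpose X))^2 \<le> (1 + \<epsilon>) * (W \<bullet> W)"
  proof -
    have "(norm (W ** transpose X))^2 = (W ** transpose X) \<bullet> (W ** transpose X)"
      by (simp add: power2_norm_eq_inner)
    also have "\<dots> = W \<bullet> ((W ** transpose X) ** X)" by (simp only: inner_mult_right transpose_transpose)
    also have "\<dots> = W \<bullet> (W ** C) + W \<bullet> W"
      by (simp only: matrix_mul_assoc[symmetric] M mm_add_l matrix_mul_rid inner_add_right)
    also have "\<dots> \<le> norm W * (norm W * norm C) + W \<bullet> W"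
    proof -
      have "W \<bullet> (W ** C) \<le> norm W * norm (W ** C)" by (rule norm_cauchy_schwarz)
      also have "\<dots> \<le> norm W * (norm W * norm C)" by (simp add: mult_left_mono norm_mm_le)
      finally show ?thesis by simp
    qed
    also have "\<dots> \<le> norm W * (norm W * \<epsilon>) + W \<bullet> W"
      using nC unfolding C_def[symmetric] by (simp add: mult_left_mono)
    also have "\<dots> = (1 + \<epsilon>) * (W \<bullet> W)" using w2 by (simp add: algebra_simps power2_eq_square)
    finally show ?thesis .
  qed
  have e0: "\<epsilon> \<ge> 0" using nC norm_ge_zero order_trans by blast
  show ?thesis
  proof (cases "W \<bullet> W = 0")
    case True
    then show ?thesis unfolding W_def[symmetric] w2 using e0 by simp
  next
    case False
    then have wpos: "W \<bullet> W > 0" by (simp add: order_less_le)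
    have "(W \<bullet> W)^2 \<le> (norm Om * norm (W ** transpose X))^2"
      using h1 wpos by (intro power_mono) auto
    also have "\<dots> = (Om \<bullet> Om) * (norm (W ** transpose X))^2"
      by (simp add: power_mult_distrib power2_norm_eq_inner)
    also have "\<dots> \<le> (Om \<bullet> Om) * ((1 + \<epsilon>) * (W \<bullet> W))"
      using h2 by (simp add: mult_left_mono)
    finally have "(W \<bullet> W) * (W \<bullet> W) \<le> ((1 + \<epsilon>) * (Om \<bullet> Om)) * (W \<bullet> W)"
      by (simp add: power2_eq_square algebra_simps)
    then have "W \<bullet> W \<le> (1 + \<epsilon>) * (Om \<bullet> Om)" using wpos by simp
    then show ?thesis unfolding W_def[symmetric] w2 .
  qed
qed



lemma mm_neg_r: "(- (A::real^'k^'m)) ** (B::real^'l^'k) = - (A ** B)"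
  by (simp add: matrix_matrix_mult_def vec_eq_iff sum_negf)
lemma mm_neg_l: "(A::real^'k^'m) ** (- (B::real^'l^'k)) = - (A ** B)"
  by (simp add: matrix_matrix_mult_def vec_eq_iff sum_negf)

theorem proposition6:
  fixes f :: "real^'p^'n \<Rightarrow> real"
    and lam \<epsilon> L \<mu> \<nu> :: real
  assumes np: "CARD('p) \<le> CARD('n)"
    and lam: "lam > 0"
    and eps: "0 < \<epsilon>" "\<epsilon> < 3/4"
    and f: "twice_cont_diff f"
    and L: "L > 0" "L-lipschitz_on (stiefel_eps \<epsilon>) (fgrad f)"
    and mu: "\<mu> \<ge> 2 / (3 - 4*\<epsilon>) *
        (L * (1 - \<epsilon>)
         + 3 * (SUP X\<in>stiefel_eps \<epsilon>. norm (msym (transpose X ** fgrad f X)))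
         + (max L (SUP X\<in>stiefel_eps \<epsilon>. norm (fgrad f X)))\<^sup>2
             * (1 + \<epsilon>)\<^sup>2 / (lam * (1 - \<epsilon>)))"
    and nu: "\<nu> = lam * \<mu>"
  shows "\<forall>X\<in>stiefel_eps \<epsilon>.
           fgrad (Lcal f \<mu>) X \<bullet> landing f lam X
             \<ge> (1/2) * (norm (rgrad f X))\<^sup>2 + \<nu> * Ncal X"
proof
  fix X :: "real^'p^'n" assume XS: "X \<in> stiefel_eps \<epsilon>"
  define G where "G = fgrad f X"
  define H where "H = frechet_derivative (fgrad f) (at X)"
  define C where "C = transpose X ** X - mat 1"
  define \<psi> where "\<psi> = msym (transpose X ** fgrad f X)"
  define Om where "Om = mskew (G ** transpose X)"
  define W where "W = Om ** X"
  define XC where "XC = X ** C"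
  define Lp where "Lp = (SUP X\<in>stiefel_eps \<epsilon>. norm (fgrad f X))"
  define sPP where "sPP = (SUP X\<in>stiefel_eps \<epsilon>. norm (msym (transpose X ** fgrad f X)))"
  define Lh where "Lh = max L Lp"
  have rg: "rgrad f X = W" unfolding rgrad_def W_def Om_def G_def ..
  have land: "landing f lam X = W + lam *\<^sub>R XC"
    unfolding landing_def rg XC_def C_def ..
  have nc: "Ncal X = (1/4) * (norm C)^2" unfolding Ncal_def C_def ..
  have nC: "norm C \<le> \<epsilon>" using XS unfolding stiefel_eps_def C_def by simp
  have Cs: "transpose C = C" unfolding C_def by (simp add: tr_diff matrix_transpose_mul)
  have ps: "transpose \<psi> = \<psi>" unfolding \<psi>_def by (rule msym_tr)
  have CCs: "transpose (C ** C) = C ** C" by (simp add: matrix_transpose_mul Cs)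
  have M: "transpose X ** X = C + mat 1" unfolding C_def by simp
  have Gd: "(fgrad f has_derivative H) (at X)"
    using f unfolding twice_cont_diff_def frechet_derivative_works H_def by blast
  have lin: "linear H" using Gd has_derivative_linear by blast
  have DL: "\<And>V. fgrad (Lcal f \<mu>) X \<bullet> V = G \<bullet> V - (1/2) * (G \<bullet> (V ** C)) - (1/2) * (H V \<bullet> XC)
     - \<psi> \<bullet> (transpose X ** V) + \<mu> * (C \<bullet> (transpose X ** V))"
    unfolding G_def H_def C_def \<psi>_def XC_def by (rule DL_value[OF f])
  have f1: "G \<bullet> W = Om \<bullet> Om"
  proof -
    have "G \<bullet> W = W \<bullet> G" by (rule inner_commute)
    also have "\<dots> = Om \<bullet> (G ** transpose X)" unfolding W_def by (rule inner_mult_right)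
    also have "\<dots> = (G ** transpose X) \<bullet> Om" by (rule inner_commute)
    also have "\<dots> = Om \<bullet> Om" unfolding Om_def by (rule skew_self)
    finally show ?thesis .
  qed
  have skw: "transpose (transpose X ** W) = - (transpose X ** W)"
  proof -
    have "transpose (transpose X ** W) = transpose X ** (transpose Om ** X)"
      unfolding W_def by (simp add: matrix_transpose_mul matrix_mul_assoc)
    also have "\<dots> = - (transpose X ** W)"
      unfolding W_def Om_def mskew_tr by (simp only: mm_neg_r mm_neg_l matrix_mul_assoc)
    finally show ?thesis .
  qed
  have f2: "\<psi> \<bullet> (transpose X ** W) = 0" by (rule sym_skew[OF ps skw])
  have f3: "C \<bullet> (transpose X ** W) = 0" by (rule sym_skew[OF Cs skw])
  have f4: "G \<bullet> XC = \<psi> \<bullet> C"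
  proof -
    have "G \<bullet> XC = XC \<bullet> G" by (rule inner_commute)
    also have "\<dots> = C \<bullet> (transpose X ** G)" unfolding XC_def by (rule inner_mult_left)
    also have "\<dots> = (transpose X ** G) \<bullet> C" by (rule inner_commute)
    also have "\<dots> = \<psi> \<bullet> C" unfolding \<psi>_def G_def by (rule inner_sym[OF Cs])
    finally show ?thesis .
  qed
  have f5: "G \<bullet> (XC ** C) = \<psi> \<bullet> (C ** C)"
  proof -
    have xcc: "XC ** C = X ** (C ** C)" unfolding XC_def by (simp only: matrix_mul_assoc)
    have "G \<bullet> (XC ** C) = (X ** (C ** C)) \<bullet> G" unfolding xcc by (rule inner_commute)
    also have "\<dots> = (C ** C) \<bullet> (transpose X ** G)" by (rule inner_mult_left)
    also have "\<dots> = (transpose X ** G) \<bullet> (C ** C)" by (rule inner_commute)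
    also have "\<dots> = \<psi> \<bullet> (C ** C)" unfolding \<psi>_def G_def by (rule inner_sym[OF CCs])
    finally show ?thesis .
  qed
  have XXC: "transpose X ** XC = C + C ** C"
    unfolding XC_def by (simp add: matrix_mul_assoc M mm_add_r)
  have f6: "\<psi> \<bullet> (transpose X ** XC) = \<psi> \<bullet> C + \<psi> \<bullet> (C ** C)"
    unfolding XXC by (rule inner_add_right)
  have f7: "C \<bullet> (transpose X ** XC) = XC \<bullet> XC"
    unfolding XC_def by (simp add: inner_mult_left)
  have HL: "H (W + lam *\<^sub>R XC) = H W + lam *\<^sub>R H XC" using lin by (simp add: linear_add linear_scale)
  have val: "fgrad (Lcal f \<mu>) X \<bullet> (W + lam *\<^sub>R XC) = Om \<bullet> Om - (1/2) * (G \<bullet> (W ** C)) - (1/2) * (H W \<bullet> XC)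
      + lam * (-(3/2) * (\<psi> \<bullet> (C ** C)) - (1/2) * (H XC \<bullet> XC) + \<mu> * (XC \<bullet> XC))"
    unfolding DL HL
    apply (simp only: inner_add_right inner_add_left mm_add_r mm_scale_r mm_add_l mm_scale_l inner_scaleR_right inner_scaleR_left f1 f2 f3 f4 f5 f6 f7)
    apply (simp add: algebra_simps)
    done
  have bG: "bdd_above ((\<lambda>X. norm (fgrad f X)) ` stiefel_eps \<epsilon>)"
    by (rule bdd_cont[OF S_compact G_cont[OF f]])
  have bP: "bdd_above ((\<lambda>X. norm (msym (transpose X ** fgrad f X))) ` stiefel_eps \<epsilon>)"
    by (rule bdd_cont[OF S_compact psi_cont[OF f]])
  have nG: "norm G \<le> Lh"
  proof -
    have "norm G \<le> Lp" unfolding G_def Lp_def by (rule cSUP_upper[OF XS bG])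
    then show ?thesis unfolding Lh_def by simp
  qed
  have npsi: "norm \<psi> \<le> sPP" unfolding \<psi>_def sPP_def by (rule cSUP_upper[OF XS bP])
  have sp0: "sPP \<ge> 0" using npsi norm_ge_zero order_trans by blast
  have LLh: "L \<le> Lh" unfolding Lh_def by simp
  have Lh0: "Lh \<ge> 0" using LLh L by simp
  have hb: "\<And>V. norm (H V) \<le> L * norm V"
    unfolding H_def by (rule hess_bound[OF f eps(1) _ L(2) XS]) (use eps in simp)
  define c where "c = norm C"
  define w where "w = norm W"
  define x where "x = norm XC"
  have xx: "XC \<bullet> XC = x^2" unfolding x_def by (simp add: power2_norm_eq_inner)
  have ccc: "\<bar>C \<bullet> (C ** C)\<bar> \<le> c * (c * c)"
  proof -
    have "\<bar>C \<bullet> (C ** C)\<bar> \<le> norm C * norm (C ** C)" by (rule Cauchy_Schwarz_ineq2)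
    also have "\<dots> \<le> c * (c * c)" unfolding c_def by (simp add: mult_left_mono norm_mm_le)
    finally show ?thesis .
  qed
  have x2eq: "x^2 = c^2 + C \<bullet> (C ** C)"
    unfolding xx[symmetric] f7[symmetric] XXC c_def by (simp add: inner_add_right power2_norm_eq_inner)
  have c3: "c * (c * c) \<le> \<epsilon> * c^2" using nC unfolding c_def
    by (simp add: power2_eq_square mult_right_mono)
  have x1: "x^2 \<le> (1+\<epsilon>)*c^2" using x2eq ccc c3 by (simp add: algebra_simps)
  have x2: "x^2 \<ge> (1-\<epsilon>)*c^2" using x2eq ccc c3 by (simp add: algebra_simps)
  have om: "w^2 \<le> (1+\<epsilon>)*(Om \<bullet> Om)"
    unfolding w_def W_def by (rule W_bound) (use nC C_def in simp)
  have t1: "\<bar>G \<bullet> (W ** C)\<bar> \<le> Lh*w*c"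
  proof -
    have "\<bar>G \<bullet> (W ** C)\<bar> \<le> norm G * norm (W ** C)" by (rule Cauchy_Schwarz_ineq2)
    also have "\<dots> \<le> norm G * (w * c)" unfolding w_def c_def by (simp add: mult_left_mono norm_mm_le)
    also have "\<dots> \<le> Lh * (w * c)" using nG by (simp add: mult_right_mono w_def c_def)
    finally show ?thesis by (simp add: mult.assoc)
  qed
  have t2: "\<bar>H W \<bullet> XC\<bar> \<le> Lh*w*x"
  proof -
    have "\<bar>H W \<bullet> XC\<bar> \<le> norm (H W) * x" unfolding x_def by (rule Cauchy_Schwarz_ineq2)
    also have "\<dots> \<le> (L * w) * x" unfolding w_def x_def using hb[of W] by (simp add: mult_right_mono)
    also have "\<dots> \<le> (Lh * w) * x" unfolding w_def x_def using LLh by (simp add: mult_right_mono)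
    finally show ?thesis .
  qed
  have t3: "\<psi> \<bullet> (C ** C) \<le> sPP*c^2"
  proof -
    have "\<psi> \<bullet> (C ** C) \<le> norm \<psi> * norm (C ** C)" by (rule norm_cauchy_schwarz)
    also have "\<dots> \<le> sPP * (c * c)" unfolding c_def using npsi sp0
      by (intro mult_mono) (simp_all add: norm_mm_le)
    finally show ?thesis by (simp add: power2_eq_square)
  qed
  have t4: "H XC \<bullet> XC \<le> L*x^2"
  proof -
    have "H XC \<bullet> XC \<le> norm (H XC) * x" unfolding x_def by (rule norm_cauchy_schwarz)
    also have "\<dots> \<le> (L * x) * x" unfolding x_def using hb[of XC] by (simp add: mult_right_mono)
    finally show ?thesis by (simp add: power2_eq_square)
  qed
  have mu': "\<mu> \<ge> 2/(3-4*\<epsilon>) * (L*(1-\<epsilon>) + 3 * sPP + Lh^2*(1+\<epsilon>)^2/(lam*(1-\<epsilon>)))"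
    using mu unfolding sPP_def Lh_def Lp_def .
  have fin: "Om \<bullet> Om - (1/2)*(G \<bullet> (W ** C)) - (1/2)*(H W \<bullet> XC)
      + lam*(-(3/2)*(\<psi> \<bullet> (C ** C)) - (1/2)*(H XC \<bullet> XC) + \<mu>*x^2) \<ge> (1/2)*w^2 + lam*\<mu>*((1/4)*c^2)"
    by (rule final_arith[OF lam eps(1) eps(2) L(1) LLh sp0 _ nC[folded c_def] _ _ x1 x2 om t1 t2 t3 t4 mu']) (simp_all add: c_def w_def x_def)
  show "fgrad (Lcal f \<mu>) X \<bullet> landing f lam X \<ge> (1/2) * (norm (rgrad f X))\<^sup>2 + \<nu> * Ncal X"
    unfolding land val rg nc nu xx using fin unfolding c_def w_def by simp
qed

end
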